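(* Let $X$ be a graph (multiple edges and loops allowed) which is connected, has countable vertex set, has bounded degree, and has no vertex of degree one. Fix a vertex $x_0\in VX$. For $x\in VX$ and $m\ge 1$ let $c_m(x)$ be the number of geodesic loops of length $m$ starting at $x$, and let $N_m(x_0)$ be the number of closed geodesic paths of length $m$ starting at $x_0$. Define formal power series $C(u:x)=\sum_{m=1}^\infty c_m(x)u^m$ for $x\in VX$ and $N(u:x_0)=\sum_{m=1}^\infty N_m(x_0)u^m$, and set (coefficientwise) $(\Delta_X C(u:\cdot))(x_0)=\deg(x_0)C(u:x_0)-\sum_{e\in E_{x_0}}C(u:t(e))$. Then, as formal power series in $u$, $$N(u:x_0)=(1-u^2)^{-2}\{1-(\deg(x_0)-\Delta_X)u^2+(\deg(x_0)-1)u^4\}C(u:\cdot)(x_0),$$ that is, $$N(u:x_0)=(1-u^2)^{-2}\Big[\big(1-\deg(x_0)u^2+(\deg(x_0)-1)u^4\big)C(u:x_0)+u^2(\Delta_X C(u:\cdot))(x_0)\Big].$$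
   Context: A graph $X=(VX,EX)$ consists of disjoint sets $VX$, $EX$ with maps $e\mapsto (o(e),t(e))\in VX\times VX$ and $e\mapsto\bar e$ such that $\bar e\ne e$, $\bar{\bar e}=e$, $o(e)=t(\bar e)$. For $x\in VX$, $E_x=\{e\in EX: o(e)=x\}$ and $\deg(x)=|E_x|$; bounded degree means $\sup_x\deg(x)<\infty$. A path of length $n$ is a sequence of edges $c=(e_1,\dots,e_n)$ with $t(e_i)=o(e_{i+1})$; $o(c)=o(e_1)$, $t(c)=t(e_n)$; it is closed if $o(c)=t(c)$. It has a back-tracking if $e_{i+1}=\bar e_i$ for some $i$, and has a tail if $e_n=\bar e_1$. A geodesic loop is a closed path without back-tracking; a closed geodesic path is a geodesic loop without tail. "Starting at $x$" means $o(c)=x$. *)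

theory Defs
  imports "HOL-Computational_Algebra.Formal_Power_Series" "HOL-Library.Countable_Set"
begin

text \<open>A graph in the sense of Serre: vertex set V, edge set E, origin map org,
  terminus map tm, reversal map rv (e \<mapsto> bar e). Vertices and edges have different
  types, hence are disjoint.\<close>

definition is_graph ::
  "'v set \<Rightarrow> 'e set \<Rightarrow> ('e \<Rightarrow> 'v) \<Rightarrow> ('e \<Rightarrow> 'v) \<Rightarrow> ('e \<Rightarrow> 'e) \<Rightarrow> bool" where
  "is_graph V E org tm rv \<longleftrightarrow>
     (\<forall>e\<in>E. org e \<in> V \<and> tm e \<in> V \<and> rv e \<in> E \<and> rv e \<noteq> e \<and> rv (rv e) = e
            \<and> org e = tm (rv e))"

definition out_edges :: "'e set \<Rightarrow> ('e \<Rightarrow> 'v) \<Rightarrow> 'v \<Rightarrow> 'e set" where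
  "out_edges E org x = {e\<in>E. org e = x}"

definition gdeg :: "'e set \<Rightarrow> ('e \<Rightarrow> 'v) \<Rightarrow> 'v \<Rightarrow> nat" where
  "gdeg E org x = card (out_edges E org x)"

definition bounded_degree :: "'v set \<Rightarrow> 'e set \<Rightarrow> ('e \<Rightarrow> 'v) \<Rightarrow> bool" where
  "bounded_degree V E org \<longleftrightarrow>
     (\<exists>K::nat. \<forall>x\<in>V. finite (out_edges E org x) \<and> gdeg E org x \<le> K)"

definition is_path :: "'e set \<Rightarrow> ('e \<Rightarrow> 'v) \<Rightarrow> ('e \<Rightarrow> 'v) \<Rightarrow> 'e list \<Rightarrow> bool" where
  "is_path E org tm c \<longleftrightarrow> set c \<subseteq> E \<and>
     (\<forall>i. Suc i < length c \<longrightarrow> tm (c ! i) = org (c ! Suc i))"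

definition connected_graph ::
  "'v set \<Rightarrow> 'e set \<Rightarrow> ('e \<Rightarrow> 'v) \<Rightarrow> ('e \<Rightarrow> 'v) \<Rightarrow> bool" where
  "connected_graph V E org tm \<longleftrightarrow>
     (\<forall>x\<in>V. \<forall>y\<in>V. x = y \<or>
        (\<exists>c. c \<noteq> [] \<and> is_path E org tm c \<and> org (hd c) = x \<and> tm (last c) = y))"

definition has_backtracking :: "('e \<Rightarrow> 'e) \<Rightarrow> 'e list \<Rightarrow> bool" where
  "has_backtracking rv c \<longleftrightarrow> (\<exists>i. Suc i < length c \<and> c ! Suc i = rv (c ! i))"

definition has_tail :: "('e \<Rightarrow> 'e) \<Rightarrow> 'e list \<Rightarrow> bool" where
  "has_tail rv c \<longleftrightarrow> c \<noteq> [] \<and> last c = rv (hd c)"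

definition geodesic_loops ::
  "'e set \<Rightarrow> ('e \<Rightarrow> 'v) \<Rightarrow> ('e \<Rightarrow> 'v) \<Rightarrow> ('e \<Rightarrow> 'e) \<Rightarrow> nat \<Rightarrow> 'v \<Rightarrow> 'e list set" where
  "geodesic_loops E org tm rv m x =
     {c. length c = m \<and> c \<noteq> [] \<and> is_path E org tm c \<and> org (hd c) = x \<and> tm (last c) = x
         \<and> \<not> has_backtracking rv c}"

definition closed_geodesics ::
  "'e set \<Rightarrow> ('e \<Rightarrow> 'v) \<Rightarrow> ('e \<Rightarrow> 'v) \<Rightarrow> ('e \<Rightarrow> 'e) \<Rightarrow> nat \<Rightarrow> 'v \<Rightarrow> 'e list set" where
  "closed_geodesics E org tm rv m x =
     {c \<in> geodesic_loops E org tm rv m x. \<not> has_tail rv c}"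

definition loopC ::
  "'e set \<Rightarrow> ('e \<Rightarrow> 'v) \<Rightarrow> ('e \<Rightarrow> 'v) \<Rightarrow> ('e \<Rightarrow> 'e) \<Rightarrow> 'v \<Rightarrow> rat fps" where
  "loopC E org tm rv x =
     Abs_fps (\<lambda>m. if m = 0 then 0 else of_nat (card (geodesic_loops E org tm rv m x)))"

definition closedN ::
  "'e set \<Rightarrow> ('e \<Rightarrow> 'v) \<Rightarrow> ('e \<Rightarrow> 'v) \<Rightarrow> ('e \<Rightarrow> 'e) \<Rightarrow> 'v \<Rightarrow> rat fps" where
  "closedN E org tm rv x =
     Abs_fps (\<lambda>m. if m = 0 then 0 else of_nat (card (closed_geodesics E org tm rv m x)))"

definition graph_laplacian ::
  "'e set \<Rightarrow> ('e \<Rightarrow> 'v) \<Rightarrow> ('e \<Rightarrow> 'v) \<Rightarrow> ('v \<Rightarrow> rat fps) \<Rightarrow> 'v \<Rightarrow> rat fps" where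
  "graph_laplacian E org tm F x =
     of_nat (gdeg E org x) * F x - (\<Sum>e\<in>out_edges E org x. F (tm e))"

end

theory Submission
  imports Defs
begin

unbundle fps_syntax

definition RR :: "('e \<Rightarrow> 'v) \<Rightarrow> ('e \<Rightarrow> 'v) \<Rightarrow> ('e \<Rightarrow> 'e) \<Rightarrow> 'e \<Rightarrow> 'e \<Rightarrow> bool" where
  "RR org tm rv a b \<longleftrightarrow> tm a = org b \<and> b \<noteq> rv a"

lemma GL_char:
  "c \<in> geodesic_loops E org tm rv n y \<longleftrightarrow>
     length c = n \<and> c \<noteq> [] \<and> set c \<subseteq> E \<and> successively (RR org tm rv) c
     \<and> org (hd c) = y \<and> tm (last c) = y"
proof -
  have "successively (RR org tm rv) c \<longleftrightarrow>
     successively (\<lambda>a b. tm a = org b) c \<and> successively (\<lambda>a b. b \<noteq> rv a) c"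
    unfolding successively_conv_nth RR_def by blast
  then show ?thesis
    unfolding geodesic_loops_def is_path_def has_backtracking_def successively_conv_nth
    by auto
qed

locale gr =
  fixes V :: "'v set" and E :: "'e set" and org tm :: "'e \<Rightarrow> 'v" and rv :: "'e \<Rightarrow> 'e"
  assumes graph: "is_graph V E org tm rv"
    and fin: "\<forall>x\<in>V. finite (out_edges E org x)"
begin

abbreviation "R \<equiv> RR org tm rv"
abbreviation "GL \<equiv> geodesic_loops E org tm rv"
definition "rvs c = rev (map rv c)"

lemma g_org: "e \<in> E \<Longrightarrow> org e \<in> V" and g_tm: "e \<in> E \<Longrightarrow> tm e \<in> V"
  and g_rvE: "e \<in> E \<Longrightarrow> rv e \<in> E" and g_neq: "e \<in> E \<Longrightarrow> rv e \<noteq> e"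
  and g_inv: "e \<in> E \<Longrightarrow> rv (rv e) = e" and g_otr: "e \<in> E \<Longrightarrow> org e = tm (rv e)"
  using graph unfolding is_graph_def by auto

lemma g_tor: "e \<in> E \<Longrightarrow> tm e = org (rv e)"
  using g_otr[of "rv e"] g_inv g_rvE by auto

lemma rv_inj: "a \<in> E \<Longrightarrow> b \<in> E \<Longrightarrow> rv a = rv b \<longleftrightarrow> a = b"
  using g_inv by metis

lemma rvs_rvs: "set c \<subseteq> E \<Longrightarrow> rvs (rvs c) = c"
  unfolding rvs_def rev_map[symmetric] by (induction c) (auto simp: g_inv)

lemma rvs_set: "set c \<subseteq> E \<Longrightarrow> set (rvs c) \<subseteq> E"
  unfolding rvs_def using g_rvE by auto

lemma rvs_succ: "set c \<subseteq> E \<Longrightarrow> successively R c \<Longrightarrow> successively R (rvs c)"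
  unfolding rvs_def successively_rev successively_map
proof (erule successively_mono)
  fix x y assume "set c \<subseteq> E" "x \<in> set c" "y \<in> set c" "R x y"
  then have "x \<in> E" "y \<in> E" by auto
  then show "R (rv y) (rv x)" using \<open>R x y\<close> unfolding RR_def
    by (metis g_otr g_tor g_inv)
qed

lemma rvs_simps: "length (rvs c) = length c" "rvs c = [] \<longleftrightarrow> c = []"
  "c \<noteq> [] \<Longrightarrow> hd (rvs c) = rv (last c)" "c \<noteq> [] \<Longrightarrow> last (rvs c) = rv (hd c)"
  unfolding rvs_def by (auto simp: hd_rev last_rev hd_map last_map)

lemma rvs_GL: "c \<in> GL n y \<Longrightarrow> rvs c \<in> GL n y"
  unfolding GL_char using rvs_succ rvs_set rvs_simps
  by (metis g_otr g_tor in_mono last_in_set hd_in_set)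

lemma finite_paths:
  "y \<in> V \<Longrightarrow> finite {c. length c = n \<and> set c \<subseteq> E \<and> successively R c \<and> (c \<noteq> [] \<longrightarrow> org (hd c) = y)}"
proof (induction n arbitrary: y)
  case 0
  then show ?case by simp
next
  case (Suc n)
  let ?P = "\<lambda>n y. {c. length c = n \<and> set c \<subseteq> E \<and> successively R c \<and> (c \<noteq> [] \<longrightarrow> org (hd c) = y)}"
  have "?P (Suc n) y \<subseteq> (\<Union>e\<in>out_edges E org y. (#) e ` ?P n (tm e))"
  proof
    fix c assume c: "c \<in> ?P (Suc n) y"
    then obtain e c' where ce: "c = e # c'" by (cases c) auto
    have "e \<in> out_edges E org y" using c ce by (auto simp: out_edges_def)
    moreover have "c' \<in> ?P n (tm e)" using c ce by (auto simp: successively_Cons RR_def)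
    ultimately show "c \<in> (\<Union>e\<in>out_edges E org y. (#) e ` ?P n (tm e))" using ce by blast
  qed
  moreover have "finite (\<Union>e\<in>out_edges E org y. (#) e ` ?P n (tm e))"
    using fin Suc by (auto simp: out_edges_def g_tm)
  ultimately show ?case by (rule finite_subset)
qed

lemma finite_GL: "y \<in> V \<Longrightarrow> finite (GL n y)"
  by (rule finite_subset[OF _ finite_paths[of y n]]) (auto simp: GL_char)


lemma org_rv[simp]: "e \<in> E \<Longrightarrow> org (rv e) = tm e" using g_tor by simp
lemma tm_rv[simp]: "e \<in> E \<Longrightarrow> tm (rv e) = org e" using g_otr by simp
lemma rv_rv[simp]: "e \<in> E \<Longrightarrow> rv (rv e) = e" using g_inv by simp

lemma R_to_rv: "a \<in> E \<Longrightarrow> e \<in> E \<Longrightarrow> R a (rv e) \<longleftrightarrow> tm a = tm e \<and> a \<noteq> e"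
  unfolding RR_def using rv_inj by auto
lemma R_from_rv: "e \<in> E \<Longrightarrow> R (rv e) b \<longleftrightarrow> org e = org b \<and> b \<noteq> e"
  unfolding RR_def by auto

lemma len2_split: "length c = Suc (Suc n) \<Longrightarrow> \<exists>e c' f. c = e # c' @ [f] \<and> length c' = n"
  by (cases c; cases "tl c" rule: rev_cases) auto

lemma GL_ccs: "e # c @ [f] \<in> GL m y \<longleftrightarrow> m = Suc (Suc (length c)) \<and> e \<in> E \<and> f \<in> E \<and> set c \<subseteq> E
    \<and> org e = y \<and> tm f = y \<and> (if c = [] then R e f else R e (hd c) \<and> successively R c \<and> R (last c) f)"
  by (cases "c = []") (auto simp: GL_char successively_Cons successively_append_iff)

lemma GL_c: "e # c \<in> GL m y \<longleftrightarrow> m = Suc (length c) \<and> e \<in> E \<and> set c \<subseteq> E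
    \<and> org e = y \<and> (if c = [] then tm e = y else tm (last c) = y \<and> R e (hd c) \<and> successively R c)"
  by (cases "c = []") (auto simp: GL_char successively_Cons)

end

context gr
begin

context fixes x assumes xV: "x \<in> V"
begin

definition "Ox = out_edges E org x"
definition "Tl m = {c \<in> GL m x. has_tail rv c}"
definition "A n e = {c \<in> GL n (tm e). hd c \<noteq> rv e \<and> last c \<noteq> e}"
definition "F n e = {c \<in> GL n (tm e). hd c = rv e}"
definition "L n e = {c \<in> GL n (tm e). last c = e}"
definition "B n e = {c \<in> GL n (tm e). hd c = rv e \<and> last c = e}"
definition "F' n e = {c \<in> GL n (tm e). hd c = rv e \<and> last c \<noteq> e}"
definition "D n e = {c \<in> GL n x. hd c \<noteq> e \<and> last c \<noteq> rv e}"

lemma Ox_fin: "finite Ox" using fin xV Ox_def by auto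
lemma OxE: "e \<in> Ox \<Longrightarrow> e \<in> E \<and> org e = x" by (auto simp: Ox_def out_edges_def)
lemma fGL: "e \<in> Ox \<Longrightarrow> finite (GL n (tm e))" using OxE g_tm finite_GL by blast

lemma card_Tl: "card (Tl (Suc (Suc n))) = (\<Sum>e\<in>Ox. card (A n e))"
proof -
  have "bij_betw (\<lambda>c. (hd c, butlast (tl c))) (Tl (Suc (Suc n))) (Sigma Ox (A n))"
  proof (rule bij_betw_byWitness[where f'="\<lambda>(e,c). e # c @ [rv e]"])
    show "\<forall>c\<in>Tl (Suc (Suc n)). (\<lambda>(e,c). e # c @ [rv e]) (hd c, butlast (tl c)) = c"
    proof
      fix c assume c: "c \<in> Tl (Suc (Suc n))"
      then obtain e c' f where cc: "c = e # c' @ [f]" "length c' = n"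
        using len2_split unfolding Tl_def GL_char by blast
      then show "(\<lambda>(e,c). e # c @ [rv e]) (hd c, butlast (tl c)) = c"
        using c by (auto simp: Tl_def has_tail_def)
    qed
    show "\<forall>p\<in>Sigma Ox (A n). (\<lambda>c. (hd c, butlast (tl c))) ((\<lambda>(e,c). e # c @ [rv e]) p) = p"
      by auto
    show "(\<lambda>c. (hd c, butlast (tl c))) ` Tl (Suc (Suc n)) \<subseteq> Sigma Ox (A n)"
    proof (rule image_subsetI)
      fix c assume c: "c \<in> Tl (Suc (Suc n))"
      then obtain e c' f where cc: "c = e # c' @ [f]" "length c' = n"
        using len2_split unfolding Tl_def GL_char by blast
      have f: "f = rv e" using c cc by (auto simp: Tl_def has_tail_def)
      have m: "e # c' @ [rv e] \<in> GL (Suc (Suc n)) x" using c cc f by (auto simp: Tl_def)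
      have "c' \<noteq> []" using m by (auto simp: GL_ccs RR_def)
      then have h: "e \<in> E" "set c' \<subseteq> E" "org e = x" "R e (hd c')" "successively R c'"
          "R (last c') (rv e)"
        using m by (auto simp: GL_ccs)
      have "c' \<in> A n e" unfolding A_def GL_char using h cc \<open>c' \<noteq> []\<close>
        by (auto simp: RR_def)
      then show "(hd c, butlast (tl c)) \<in> Sigma Ox (A n)"
        using cc f h by (auto simp: Ox_def out_edges_def)
    qed
    show "(\<lambda>(e,c). e # c @ [rv e]) ` Sigma Ox (A n) \<subseteq> Tl (Suc (Suc n))"
    proof clarify
      fix e c assume e: "e \<in> Ox" and c: "c \<in> A n e"
      have "e \<in> E" "org e = x" using OxE e by auto
      then show "e # c @ [rv e] \<in> Tl (Suc (Suc n))"
      proof -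
        have "c \<noteq> []" "set c \<subseteq> E" "successively R c" "R e (hd c)" "length c = n"
          "tm (last c) = tm e" "last c \<noteq> e"
          using c \<open>e \<in> E\<close> by (auto simp: A_def GL_char RR_def)
        moreover have "R (last c) (rv e)" using calculation \<open>e \<in> E\<close>
          by (subst R_to_rv) auto
        ultimately
        show ?thesis using \<open>e \<in> E\<close> \<open>org e = x\<close>
          by (auto simp: Tl_def GL_ccs has_tail_def g_rvE)
      qed
    qed
  qed
  then have "card (Tl (Suc (Suc n))) = card (Sigma Ox (A n))" by (rule bij_betw_same_card)
  also have "\<dots> = (\<Sum>e\<in>Ox. card (A n e))"
    using Ox_fin fGL by (intro card_SigmaI) (auto simp: A_def)
  finally show ?thesis .
qed


lemma card_A: assumes e: "e \<in> Ox"
  shows "int (card (A n e)) = int (card (GL n (tm e))) - card (F n e) - card (L n e) + card (B n e)"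
proof -
  have fin: "finite (GL n (tm e))" using fGL e by auto
  have A: "A n e = GL n (tm e) - (F n e \<union> L n e)" by (auto simp: A_def F_def L_def)
  have sub: "F n e \<union> L n e \<subseteq> GL n (tm e)" by (auto simp: F_def L_def)
  have I: "F n e \<inter> L n e = B n e" by (auto simp: F_def L_def B_def)
  have "card (A n e) = card (GL n (tm e)) - card (F n e \<union> L n e)"
    unfolding A using card_Diff_subset[OF finite_subset[OF sub fin] sub] .
  moreover have "card (F n e \<union> L n e) + card (B n e) = card (F n e) + card (L n e)"
    using card_Un_Int[of "F n e" "L n e"] fin sub I by (metis finite_Un finite_subset)
  moreover have "card (F n e \<union> L n e) \<le> card (GL n (tm e))" using fin sub card_mono by blast
  ultimately show ?thesis by linarith
qed

lemma card_LF: assumes e: "e \<in> Ox" shows "card (L n e) = card (F n e)"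
proof -
  have eE: "e \<in> E" using OxE e by auto
  have "bij_betw rvs (F n e) (L n e)"
  proof (rule bij_betw_byWitness[where f'=rvs])
    show "\<forall>a\<in>F n e. rvs (rvs a) = a" by (auto simp: F_def GL_char rvs_rvs)
    show "\<forall>a\<in>L n e. rvs (rvs a) = a" by (auto simp: L_def GL_char rvs_rvs)
    show "rvs ` F n e \<subseteq> L n e"
    proof (rule image_subsetI)
      fix a assume a: "a \<in> F n e"
      then have "a \<in> GL n (tm e)" "hd a = rv e" "a \<noteq> []" by (auto simp: F_def GL_char)
      then show "rvs a \<in> L n e" using eE by (auto simp: L_def rvs_GL rvs_simps)
    qed
    show "rvs ` L n e \<subseteq> F n e"
    proof (rule image_subsetI)
      fix a assume a: "a \<in> L n e"
      then have "a \<in> GL n (tm e)" "last a = e" "a \<noteq> []" by (auto simp: L_def GL_char)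
      then show "rvs a \<in> F n e" using eE by (auto simp: F_def rvs_GL rvs_simps)
    qed
  qed
  then show ?thesis by (simp add: bij_betw_same_card)
qed

lemma card_FB: assumes e: "e \<in> Ox" shows "card (F n e) = card (F' n e) + card (B n e)"
proof -
  have fin: "finite (GL n (tm e))" using fGL e by auto
  have "F n e = F' n e \<union> B n e" "F' n e \<inter> B n e = {}" by (auto simp: F_def F'_def B_def)
  moreover have "finite (F' n e)" "finite (B n e)"
    using fin by (auto simp: F'_def B_def)
  ultimately show ?thesis by (simp add: card_Un_disjoint)
qed


lemma card_F': "(\<Sum>e\<in>Ox. card (F' n e)) = card (closed_geodesics E org tm rv n x)"
proof -
  let ?f = "\<lambda>(e,c). e # rvs (tl c)"
  let ?g = "\<lambda>l. (hd l, rv (hd l) # rvs (tl l))"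
  let ?CG = "closed_geodesics E org tm rv n x"
  have "bij_betw ?f (Sigma Ox (F' n)) ?CG"
  proof (rule bij_betw_byWitness[where f'="?g"])
    show "\<forall>p\<in>Sigma Ox (F' n). ?g (?f p) = p"
    proof
      fix p assume p: "p \<in> Sigma Ox (F' n)"
      then obtain e c where pe: "p = (e, c)" "e \<in> Ox" "c \<in> F' n e" by auto
      then have "c \<noteq> []" "hd c = rv e" "set c \<subseteq> E" by (auto simp: F'_def GL_char)
      then obtain c1 where "c = rv e # c1" "set c1 \<subseteq> E" by (cases c) auto
      then show "?g (?f p) = p" using pe OxE by (auto simp: rvs_rvs)
    qed
    show "\<forall>l\<in>?CG. ?f (?g l) = l"
    proof
      fix l assume "l \<in> ?CG"
      then have "l \<noteq> []" "set l \<subseteq> E" by (auto simp: closed_geodesics_def GL_char)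
      then obtain e l1 where "l = e # l1" "set l1 \<subseteq> E" by (cases l) auto
      then show "?f (?g l) = l" by (auto simp: rvs_rvs)
    qed
    show "?f ` Sigma Ox (F' n) \<subseteq> ?CG"
    proof (rule image_subsetI)
      fix p assume p: "p \<in> Sigma Ox (F' n)"
      then obtain e c where pe: "p = (e, c)" "e \<in> Ox" "c \<in> F' n e" by auto
      then have eE: "e \<in> E" "org e = x" using OxE by auto
      have c: "c \<noteq> []" "hd c = rv e" "c \<in> GL n (tm e)" "last c \<noteq> e"
        using pe by (auto simp: F'_def GL_char)
      then obtain c1 where c1: "c = rv e # c1" by (cases c) auto
      have G: "rv e # c1 \<in> GL n (tm e)" using c c1 by simp
      show "?f p \<in> ?CG"
      proof (cases "c1 = []")
        case True
        then show ?thesis using G eE pe c1 g_neq[of e]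
          by (auto simp: closed_geodesics_def GL_c has_tail_def rvs_def)
      next
        case False
        have h: "n = Suc (length c1)" "set c1 \<subseteq> E" "tm (last c1) = tm e" "R (rv e) (hd c1)"
          "successively R c1"
          using G False eE by (auto simp: GL_c)
        have h1: "org e = org (hd c1)" "hd c1 \<noteq> e" using h(4) eE R_from_rv by auto
        have l1: "last c1 \<in> E" "hd c1 \<in> E" using h(2) False by auto
        have l2: "last c1 \<noteq> e" using c c1 False by auto
        have "R e (rv (last c1))" using l1 eE h(3) l2 R_to_rv by auto
        moreover have "rv (hd c1) \<noteq> rv e" using h1 l1 eE rv_inj by auto
        ultimately show ?thesis using h h1 l1 eE pe c1 False rvs_succ[of c1] rvs_set[of c1]
          by (auto simp: closed_geodesics_def GL_c has_tail_def rvs_simps)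
      qed
    qed
    show "?g ` ?CG \<subseteq> Sigma Ox (F' n)"
    proof (rule image_subsetI)
      fix l assume "l \<in> ?CG"
      then have L: "l \<in> GL n x" "\<not> has_tail rv l" by (auto simp: closed_geodesics_def)
      then have "l \<noteq> []" by (auto simp: GL_char)
      then obtain e l1 where le: "l = e # l1" by (cases l) auto
      have eE: "e \<in> E" "org e = x" using L le by (auto simp: GL_c)
      have eO: "e \<in> Ox" using eE by (auto simp: Ox_def out_edges_def)
      show "?g l \<in> Sigma Ox (F' n)"
      proof (cases "l1 = []")
        case True
        then have "tm e = x" using L le by (auto simp: GL_c)
        then show ?thesis using True le eE eO L g_neq[of e] g_rvE[of e]
          by (auto simp: F'_def GL_c rvs_def)
      next
        case False
        have h: "n = Suc (length l1)" "set l1 \<subseteq> E" "tm (last l1) = x" "R e (hd l1)"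
          "successively R l1"
          using L le False by (auto simp: GL_c)
        have l1: "last l1 \<in> E" "hd l1 \<in> E" using h(2) False by auto
        have nt: "last l1 \<noteq> rv e" using L le False by (auto simp: has_tail_def)
        have h1: "tm e = org (hd l1)" "hd l1 \<noteq> rv e" using h(4) unfolding RR_def by auto
        have "R (rv e) (rv (last l1))" using eE l1 h(3) nt R_from_rv
          by (metis org_rv rv_rv)
        moreover have "rv (hd l1) \<noteq> e" using h1 l1 eE by (metis rv_rv)
        ultimately show ?thesis using h h1 l1 eE eO le False rvs_succ[of l1] rvs_set[of l1] g_rvE[of e]
          by (auto simp: F'_def GL_c rvs_simps)
      qed
    qed
  qed
  then have "card (Sigma Ox (F' n)) = card ?CG" by (rule bij_betw_same_card)
  moreover have "card (Sigma Ox (F' n)) = (\<Sum>e\<in>Ox. card (F' n e))"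
    using Ox_fin fGL by (intro card_SigmaI) (auto simp: F'_def)
  ultimately show ?thesis by simp
qed


lemma B01: "B 0 e = {}" "e \<in> Ox \<Longrightarrow> B (Suc 0) e = {}"
proof -
  show "B 0 e = {}" unfolding B_def GL_char by simp
  assume "e \<in> Ox"
  then have "rv e \<noteq> e" using g_neq OxE by auto
  then show "B (Suc 0) e = {}" by (auto simp: B_def GL_char length_Suc_conv)
qed

lemma card_B: assumes e: "e \<in> Ox" shows "card (B (Suc (Suc n)) e) = card (D n e)"
proof -
  have eE: "e \<in> E" "org e = x" using OxE e by auto
  have "bij_betw (\<lambda>c. rv e # c @ [e]) (D n e) (B (Suc (Suc n)) e)"
  proof (rule bij_betw_byWitness[where f'="\<lambda>c. butlast (tl c)"])
    show "\<forall>a\<in>D n e. butlast (tl (rv e # a @ [e])) = a" by auto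
    show "\<forall>c\<in>B (Suc (Suc n)) e. rv e # butlast (tl c) @ [e] = c"
    proof
      fix c assume c: "c \<in> B (Suc (Suc n)) e"
      then have "length c = Suc (Suc n)" by (simp add: B_def GL_char)
      then obtain a c' f where "c = a # c' @ [f]" using len2_split by blast
      moreover have "hd c = rv e" "last c = e" using c by (simp_all add: B_def)
      ultimately show "rv e # butlast (tl c) @ [e] = c" by simp
    qed
    show "(\<lambda>c. rv e # c @ [e]) ` D n e \<subseteq> B (Suc (Suc n)) e"
    proof (rule image_subsetI)
      fix c assume c: "c \<in> D n e"
      then have h: "length c = n" "c \<noteq> []" "set c \<subseteq> E" "successively R c" "org (hd c) = x"
        "tm (last c) = x" "hd c \<noteq> e" "last c \<noteq> rv e"
        by (auto simp: D_def GL_char)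
      have l: "last c \<in> E" "hd c \<in> E" using h by auto
      have "R (rv e) (hd c)" using h eE R_from_rv by auto
      moreover have "R (last c) e" using h l eE unfolding RR_def by (metis rv_rv)
      ultimately have "rv e # c @ [e] \<in> GL (Suc (Suc n)) (tm e)"
        using h eE g_rvE[of e] by (simp add: GL_ccs)
      then show "rv e # c @ [e] \<in> B (Suc (Suc n)) e"
        by (simp add: B_def)
    qed
    show "(\<lambda>c. butlast (tl c)) ` B (Suc (Suc n)) e \<subseteq> D n e"
    proof (rule image_subsetI)
      fix c assume c: "c \<in> B (Suc (Suc n)) e"
      then have "length c = Suc (Suc n)" by (simp add: B_def GL_char)
      then obtain a c' f where cc: "c = a # c' @ [f]" "length c' = n"
        using len2_split by blast
      then have af: "a = rv e" "f = e" using c by (auto simp: B_def)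
      have G: "rv e # c' @ [e] \<in> GL (Suc (Suc n)) (tm e)" using c cc af by (auto simp: B_def)
      have "c' \<noteq> []" using G eE by (auto simp: GL_ccs RR_def)
      then have h: "set c' \<subseteq> E" "R (rv e) (hd c')" "successively R c'" "R (last c') e"
        using G by (auto simp: GL_ccs)
      have l: "last c' \<in> E" "hd c' \<in> E" using h \<open>c' \<noteq> []\<close> by auto
      have h2: "org (hd c') = x" "hd c' \<noteq> e" using h(2) eE R_from_rv by auto
      have h3: "tm (last c') = x" "last c' \<noteq> rv e" using h(4) eE l unfolding RR_def by auto
      have "c' \<in> D n e"
        unfolding D_def GL_char using h h2 h3 cc \<open>c' \<noteq> []\<close> by simp
      then show "butlast (tl c) \<in> D n e" using cc by simp
    qed
  qed
  then show ?thesis by (simp add: bij_betw_same_card)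
qed

lemma card_filter: "finite S \<Longrightarrow> card {c\<in>S. P c} = (\<Sum>c\<in>S. if P c then 1 else 0)"
  using sum.inter_filter[of S "\<lambda>_. 1 :: nat" P] by (simp only: card_eq_sum)

lemma card_D: "int (\<Sum>e\<in>Ox. card (D n e)) = (int (card Ox) - 2) * card (GL n x) + card (Tl n)"
proof -
  have fG: "finite (GL n x)" using finite_GL xV by auto
  have "(\<Sum>e\<in>Ox. card (D n e)) = (\<Sum>e\<in>Ox. \<Sum>c\<in>GL n x. if hd c \<noteq> e \<and> last c \<noteq> rv e then 1 else 0)"
    unfolding D_def by (rule sum.cong[OF refl], rule card_filter[OF fG])
  also have "\<dots> = (\<Sum>c\<in>GL n x. \<Sum>e\<in>Ox. if hd c \<noteq> e \<and> last c \<noteq> rv e then 1 else 0)"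
    by (rule sum.swap)
  also have "\<dots> = (\<Sum>c\<in>GL n x. card {e\<in>Ox. hd c \<noteq> e \<and> last c \<noteq> rv e})"
    by (rule sum.cong[OF refl], rule card_filter[OF Ox_fin, symmetric])
  finally have 1: "(\<Sum>e\<in>Ox. card (D n e)) = (\<Sum>c\<in>GL n x. card {e\<in>Ox. hd c \<noteq> e \<and> last c \<noteq> rv e})" .
  have 2: "int (card {e\<in>Ox. hd c \<noteq> e \<and> last c \<noteq> rv e}) = int (card Ox) - 2 + (if has_tail rv c then 1 else 0)"
    if c: "c \<in> GL n x" for c
  proof -
    have h: "c \<noteq> []" "hd c \<in> E" "last c \<in> E" "org (hd c) = x" "tm (last c) = x"
      using c by (auto simp: GL_char)
    have S: "{e\<in>Ox. hd c \<noteq> e \<and> last c \<noteq> rv e} = Ox - {hd c, rv (last c)}"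
      using h by (auto simp: Ox_def out_edges_def)
    have sub: "{hd c, rv (last c)} \<subseteq> Ox" using h g_rvE by (auto simp: Ox_def out_edges_def)
    have "card {e\<in>Ox. hd c \<noteq> e \<and> last c \<noteq> rv e} = card Ox - card {hd c, rv (last c)}"
      unfolding S using card_Diff_subset[OF finite_subset[OF sub Ox_fin] sub] .
    moreover have "card {hd c, rv (last c)} \<le> card Ox" using card_mono[OF Ox_fin sub] .
    moreover have "has_tail rv c \<longleftrightarrow> hd c = rv (last c)"
      using h unfolding has_tail_def by (metis rv_rv)
    ultimately show ?thesis by (auto simp: card_insert_if)
  qed
  have "int (\<Sum>e\<in>Ox. card (D n e)) = (\<Sum>c\<in>GL n x. int (card Ox) - 2 + (if has_tail rv c then 1 else 0))"
    unfolding 1 of_nat_sum using 2 by (rule sum.cong[OF refl])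
  also have "\<dots> = (int (card Ox) - 2) * card (GL n x) + (\<Sum>c\<in>GL n x. if has_tail rv c then 1 else 0)"
    by (simp add: sum.distrib)
  also have "(\<Sum>c\<in>GL n x. if has_tail rv c then 1 else 0) = int (card (Tl n))"
    unfolding Tl_def card_filter[OF fG] of_nat_sum by (rule sum.cong) auto
  finally show ?thesis .
qed

lemma card_split: "card (GL n x) = card (closed_geodesics E org tm rv n x) + card (Tl n)"
proof -
  have fG: "finite (GL n x)" using finite_GL xV by auto
  have "GL n x = closed_geodesics E org tm rv n x \<union> Tl n"
    "closed_geodesics E org tm rv n x \<inter> Tl n = {}"
    by (auto simp: closed_geodesics_def Tl_def)
  moreover have "finite (closed_geodesics E org tm rv n x)" "finite (Tl n)"
    using fG by (auto simp: closed_geodesics_def Tl_def)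
  ultimately show ?thesis by (simp add: card_Un_disjoint)
qed


lemma Tl01: "Tl 0 = {}" "Tl (Suc 0) = {}"
proof -
  show "Tl 0 = {}" unfolding Tl_def GL_char by simp
  show "Tl (Suc 0) = {}"
  proof (rule ccontr)
    assume "Tl (Suc 0) \<noteq> {}"
    then obtain c where c: "c \<in> Tl (Suc 0)" by blast
    then obtain a where "c = [a]" "a \<in> E" "has_tail rv [a]"
      unfolding Tl_def GL_char by (auto simp: length_Suc_conv)
    then show False using g_neq[of a] by (simp add: has_tail_def)
  qed
qed

lemma rec_int: "int (card (Tl (Suc (Suc n)))) =
   (\<Sum>e\<in>Ox. int (card (GL n (tm e)))) - 2 * (int (card (GL n x)) - int (card (Tl n)))
   - int (\<Sum>e\<in>Ox. card (B n e))"
proof -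
  have "int (card (Tl (Suc (Suc n)))) = (\<Sum>e\<in>Ox. int (card (A n e)))"
    unfolding card_Tl of_nat_sum ..
  also have "\<dots> = (\<Sum>e\<in>Ox. int (card (GL n (tm e))) - 2 * int (card (F' n e)) - int (card (B n e)))"
  proof (rule sum.cong[OF refl])
    fix e assume e: "e \<in> Ox"
    show "int (card (A n e)) = int (card (GL n (tm e))) - 2 * int (card (F' n e)) - int (card (B n e))"
      using card_A[OF e, of n] card_LF[OF e, of n] card_FB[OF e, of n] by simp
  qed
  also have "\<dots> = (\<Sum>e\<in>Ox. int (card (GL n (tm e)))) - 2 * int (\<Sum>e\<in>Ox. card (F' n e))
      - int (\<Sum>e\<in>Ox. card (B n e))"
    by (simp add: sum_subtractf sum_distrib_left of_nat_sum)
  also have "int (\<Sum>e\<in>Ox. card (F' n e)) = int (card (GL n x)) - int (card (Tl n))"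
    unfolding card_F' using card_split[of n] by simp
  finally show ?thesis .
qed

lemma SB: "int (\<Sum>e\<in>Ox. card (B n e)) =
  (if n < 2 then 0 else (int (card Ox) - 2) * int (card (GL (n-2) x)) + int (card (Tl (n-2))))"
proof (cases n)
  case 0 then show ?thesis by (simp add: B01)
next
  case (Suc k)
  show ?thesis
  proof (cases k)
    case 0 then show ?thesis using Suc by (simp add: B01)
  next
    case (Suc j)
    then have "(\<Sum>e\<in>Ox. card (B n e)) = (\<Sum>e\<in>Ox. card (D j e))"
      using \<open>n = Suc k\<close> by (intro sum.cong) (auto simp: card_B)
    then show ?thesis using card_D[of j] Suc \<open>n = Suc k\<close> by simp
  qed
qed


lemma GL0: "GL 0 y = {}" by (auto simp: GL_char)

lemma loopC_nth: "loopC E org tm rv y $ m = of_nat (card (GL m y))"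
  by (simp add: loopC_def GL0)

lemma closedN_nth: "closedN E org tm rv x $ m = of_nat (card (GL m x)) - of_nat (card (Tl m))"
  using card_split[of m] by (simp add: closedN_def GL0 closed_geodesics_def)

definition "Tf = Abs_fps (\<lambda>m. of_nat (card (Tl m)) :: rat)"

lemma hrec: "Tf = fps_X^2 * (sum (\<lambda>e. loopC E org tm rv (tm e)) Ox - fps_const 2 * loopC E org tm rv x + fps_const 2 * Tf)
   - fps_X^4 * (fps_const (of_nat (card Ox) - 2) * loopC E org tm rv x + Tf)"
proof (rule fps_ext)
  fix m
  show "Tf $ m = (fps_X^2 * (sum (\<lambda>e. loopC E org tm rv (tm e)) Ox - fps_const 2 * loopC E org tm rv x + fps_const 2 * Tf)
   - fps_X^4 * (fps_const (of_nat (card Ox) - 2) * loopC E org tm rv x + Tf)) $ m"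
  proof (cases "m < 2")
    case True
    then have "m = 0 \<or> m = 1" by auto
    then show ?thesis using True by (auto simp: Tf_def fps_X_power_mult_nth Tl01)
  next
    case False
    then obtain n where n: "m = Suc (Suc n)" by (metis add_2_eq_Suc le_add_diff_inverse not_less)
    have i: "rat_of_int (int (card (Tl (Suc (Suc n))))) = rat_of_int ((\<Sum>e\<in>Ox. int (card (GL n (tm e)))) - 2 * (int (card (GL n x)) - int (card (Tl n)))
      - (if n < 2 then 0 else (int (card Ox) - 2) * int (card (GL (n-2) x)) + int (card (Tl (n-2)))))"
      using rec_int[of n] SB[of n] by simp
    show ?thesis using i unfolding n
      by (simp add: Tf_def fps_X_power_mult_nth fps_sum_nth loopC_nth of_int_sum)
  qed
qed

lemma main: "closedN E org tm rv x =
     inverse ((1 - fps_X ^ 2) ^ 2) *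
       ((1 - of_nat (gdeg E org x) * fps_X ^ 2 + (of_nat (gdeg E org x) - 1) * fps_X ^ 4)
            * loopC E org tm rv x
        + fps_X ^ 2 * graph_laplacian E org tm (loopC E org tm rv) x)"
proof -
  define C where "C = loopC E org tm rv x"
  define S where "S = sum (\<lambda>e. loopC E org tm rv (tm e)) Ox"
  define d :: "rat fps" where "d = of_nat (card Ox)"
  define P :: "rat fps" where "P = (1 - fps_X ^ 2) ^ 2"
  have gd: "gdeg E org x = card Ox" by (simp add: gdeg_def Ox_def)
  have lap: "graph_laplacian E org tm (loopC E org tm rv) x = d * C - S"
    by (simp add: graph_laplacian_def gd d_def C_def S_def Ox_def)
  have N: "closedN E org tm rv x = C - Tf"
    by (rule fps_ext) (simp add: closedN_nth C_def loopC_nth Tf_def)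
  have c2: "fps_const (2::rat) = 2" by (simp add: numeral_fps_const)
  have cd: "fps_const (of_nat (card Ox) - 2 :: rat) = d - 2"
    by (simp add: d_def c2 fps_of_nat[symmetric] fps_const_sub[symmetric] del: fps_const_sub)
  have h: "Tf = fps_X^2 * (S - 2 * C + 2 * Tf) - fps_X^4 * ((d - 2) * C + Tf)"
    using hrec unfolding C_def S_def c2 cd .
  have key: "(C - Tf) * P = (1 - d * fps_X ^ 2 + (d - 1) * fps_X ^ 4) * C + fps_X ^ 2 * (d * C - S)"
    unfolding P_def using h by algebra
  have P0: "P $ 0 \<noteq> 0" by (simp add: P_def)
  have "inverse P * ((C - Tf) * P) = C - Tf"
    using inverse_mult_eq_1[OF P0] by (metis mult.assoc mult.commute mult_1_right)
  then have eq: "C - Tf = inverse P * ((1 - d * fps_X ^ 2 + (d - 1) * fps_X ^ 4) * C + fps_X ^ 2 * (d * C - S))"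
    using key by simp
  show ?thesis unfolding N lap gd P_def[symmetric] using eq by (simp add: C_def d_def)
qed

end
end

theorem theorem3p1:
  fixes V :: "'v set" and E :: "'e set"
    and org tm :: "'e \<Rightarrow> 'v" and rv :: "'e \<Rightarrow> 'e" and x0 :: 'v
  assumes "is_graph V E org tm rv"
    and "connected_graph V E org tm"
    and "countable V"
    and "bounded_degree V E org"
    and "\<forall>x\<in>V. gdeg E org x \<noteq> 1"
    and "x0 \<in> V"
  shows "closedN E org tm rv x0 =
     inverse ((1 - fps_X ^ 2) ^ 2) *
       ((1 - of_nat (gdeg E org x0) * fps_X ^ 2 + (of_nat (gdeg E org x0) - 1) * fps_X ^ 4)
            * loopC E org tm rv x0
        + fps_X ^ 2 * graph_laplacian E org tm (loopC E org tm rv) x0)"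
proof -
  have "\<forall>x\<in>V. finite (out_edges E org x)"
    using assms(4) unfolding bounded_degree_def by blast
  then interpret gr V E org tm rv
    using assms(1) by unfold_locales auto
  show ?thesis using main[OF assms(6)] .
qed

end
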